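(* Let $r\ge 2$ and $n\ge 2r$, and let $\mathrm{Fork}_{n,r}(x)=n+1$ if $x=0^r1^{n-r}$ (the valley), $n+2$ if $x=1^{n-r}0^r$ (the optimum), and $|x|_1$ otherwise. For any run of the (1+1) EA (mutation probability $1/n$, uniform random initialization) on $\mathrm{Fork}_{n,r}$, let $V$ be the event that the valley occurs as the current best solution before the optimum does. Then $\Pr(V)=\tfrac12$.
   Context: The (1+1) EA with mutation probability $1/n$: start with $x$ uniform in $\{0,1\}^n$; each iteration create $y$ by flipping each bit of $x$ independently with probability $1/n$, and set $x\gets y$ if $f(y)\ge f(x)$. *)

theory Defs
  imports "HOL-Probability.Probability"
begin

text \<open>Bit strings of length n are bool lists (False = 0, True = 1).\<close>

definition ones :: "bool list \<Rightarrow> nat" where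
  "ones x = length (filter id x)"

definition valley :: "nat \<Rightarrow> nat \<Rightarrow> bool list" where
  "valley n r = replicate r False @ replicate (n - r) True"

definition optimum :: "nat \<Rightarrow> nat \<Rightarrow> bool list" where
  "optimum n r = replicate (n - r) True @ replicate r False"

definition Fork :: "nat \<Rightarrow> nat \<Rightarrow> bool list \<Rightarrow> nat" where
  "Fork n r x = (if x = valley n r then n + 1
                 else if x = optimum n r then n + 2
                 else ones x)"

primrec mutate :: "real \<Rightarrow> bool list \<Rightarrow> bool list pmf" where
  "mutate p [] = return_pmf []"
| "mutate p (b # bs) =
     bind_pmf (bernoulli_pmf p) (\<lambda>c. bind_pmf (mutate p bs) (\<lambda>ys. return_pmf ((b \<noteq> c) # ys)))"

definition init :: "nat \<Rightarrow> bool list pmf" where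
  "init n = pmf_of_set {x. length x = n}"

definition ea_step :: "(bool list \<Rightarrow> nat) \<Rightarrow> nat \<Rightarrow> bool list \<Rightarrow> bool list pmf" where
  "ea_step f n x = bind_pmf (mutate (1 / real n) x)
                      (\<lambda>y. return_pmf (if f y \<ge> f x then y else x))"

fun ea_traj :: "(bool list \<Rightarrow> nat) \<Rightarrow> nat \<Rightarrow> nat \<Rightarrow> bool list list pmf" where
  "ea_traj f n 0 = map_pmf (\<lambda>x. [x]) (init n)"
| "ea_traj f n (Suc t) = bind_pmf (ea_traj f n t)
      (\<lambda>xs. map_pmf (\<lambda>y. xs @ [y]) (ea_step f n (last xs)))"

definition valley_first :: "nat \<Rightarrow> nat \<Rightarrow> bool list list set" where
  "valley_first n r = {xs. \<exists>i < length xs. xs ! i = valley n r \<and>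
                            (\<forall>j \<le> i. xs ! j \<noteq> optimum n r)}"

end

theory Submission
  imports Defs
begin

lemma mutate_len: "y \<in> set_pmf (mutate p x) \<Longrightarrow> length y = length x"
  by (induction x arbitrary: y) (auto simp: set_bind_pmf)

lemma mutate_append: "mutate p (xs @ ys) = bind_pmf (mutate p xs) (\<lambda>a. map_pmf (\<lambda>b. a @ b) (mutate p ys))"
proof (induction xs)
  case Nil
  have "((@) []) = (\<lambda>x::bool list. x)" by (rule ext) simp
  then show ?case by (simp add: bind_return_pmf pmf.map_ident)
next
  case (Cons x xs)
  then show ?case by (simp add: bind_assoc_pmf bind_return_pmf map_bind_pmf map_pmf_def)
qed

lemma mutate_single: "mutate p [b] = map_pmf (\<lambda>c. [b \<noteq> c]) (bernoulli_pmf p)"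
  by (simp add: bind_return_pmf map_pmf_def)

lemma mutate_rev: "map_pmf rev (mutate p x) = mutate p (rev x)"
proof (induction x)
  case Nil
  then show ?case by simp
next
  case (Cons b bs)
  have "map_pmf rev (mutate p (b # bs)) =
     bind_pmf (bernoulli_pmf p) (\<lambda>c. bind_pmf (mutate p bs) (\<lambda>ys. return_pmf (rev ys @ [b \<noteq> c])))"
    by (simp add: map_bind_pmf)
  also have "\<dots> = bind_pmf (mutate p bs) (\<lambda>ys. bind_pmf (bernoulli_pmf p) (\<lambda>c. return_pmf (rev ys @ [b \<noteq> c])))"
    by (rule bind_commute_pmf)
  also have "\<dots> = bind_pmf (map_pmf rev (mutate p bs)) (\<lambda>ys. map_pmf (\<lambda>z. ys @ z) (mutate p [b]))"
    by (simp add: bind_map_pmf mutate_single map_pmf_def bind_assoc_pmf bind_return_pmf)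
  also have "\<dots> = mutate p (rev (b # bs))"
    by (simp add: Cons mutate_append)
  finally show ?case .
qed

lemma pmf_map_cons: "pmf (map_pmf ((#) a) M) (c # ys) = (if a = c then pmf M ys else 0)"
proof (cases "a = c")
  case True
  then show ?thesis using pmf_map_inj'[of "(#) a" M ys] by (simp add: inj_def)
next
  case False
  then have "c # ys \<notin> (#) a ` set_pmf M" by auto
  then show ?thesis using False by (simp add: pmf_map_outside)
qed

lemma mutate_pmf_lb:
  assumes "0 \<le> p" "p \<le> 1"
  shows "length y = length x \<Longrightarrow> pmf (mutate p x) y \<ge> (min p (1-p)) ^ length x"
proof (induction x arbitrary: y)
  case Nil
  then show ?case by simp
next
  case (Cons b bs)
  then obtain c ys where y: "y = c # ys" and l: "length ys = length bs" by (cases y) auto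
  have IH: "pmf (mutate p bs) ys \<ge> (min p (1-p)) ^ length bs" using Cons.IH l by blast
  have eq: "pmf (mutate p (b # bs)) y =
     (if b \<noteq> True = c then pmf (mutate p bs) ys else 0) * p +
     (if b \<noteq> False = c then pmf (mutate p bs) ys else 0) * (1 - p)"
    using assms by (simp add: y pmf_bind map_pmf_def[symmetric] pmf_map_cons)
  have m0: "min p (1-p) \<ge> 0" using assms by simp
  have "(min p (1-p)) ^ length (b # bs) = min p (1-p) * (min p (1-p)) ^ length bs" by simp
  also have "\<dots> \<le> min p (1-p) * pmf (mutate p bs) ys" using IH m0 by (intro mult_left_mono) auto
  also have "\<dots> \<le> pmf (mutate p (b # bs)) y"
    unfolding eq using assms pmf_nonneg[of "mutate p bs" ys]
    by (cases b; cases c) (auto simp: mult.commute intro: mult_right_mono)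
  finally show ?case .
qed

definition tgt :: "nat \<Rightarrow> nat \<Rightarrow> bool list \<Rightarrow> bool" where
  "tgt n r x = (x = valley n r \<or> x = optimum n r)"

definition abs_step :: "nat \<Rightarrow> nat \<Rightarrow> bool list \<Rightarrow> bool list pmf" where
  "abs_step n r x = (if tgt n r x then return_pmf x else ea_step (Fork n r) n x)"

primrec abs_dist :: "nat \<Rightarrow> nat \<Rightarrow> nat \<Rightarrow> bool list pmf" where
  "abs_dist n r 0 = init n"
| "abs_dist n r (Suc t) = bind_pmf (abs_dist n r t) (abs_step n r)"

definition stopst :: "nat \<Rightarrow> nat \<Rightarrow> bool list list \<Rightarrow> bool list" where
  "stopst n r xs = (case find (tgt n r) xs of Some x \<Rightarrow> x | None \<Rightarrow> last xs)"

lemma traj_len: "xs \<in> set_pmf (ea_traj f n t) \<Longrightarrow> length xs = Suc t"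
  by (induction t arbitrary: xs) auto

lemma find_snoc: "find P (xs @ [y]) = (case find P xs of None \<Rightarrow> (if P y then Some y else None) | Some x \<Rightarrow> Some x)"
  by (induction xs) auto

lemma stopst_snoc: "stopst n r (xs @ [y]) = (case find (tgt n r) xs of Some x \<Rightarrow> x | None \<Rightarrow> y)"
  unfolding stopst_def find_snoc by (auto split: option.splits)

lemma stop_traj: "map_pmf (stopst n r) (ea_traj (Fork n r) n t) = abs_dist n r t"
proof (induction t)
  case 0
  have "(\<lambda>x. stopst n r [x]) = (\<lambda>x. x)" by (rule ext) (simp add: stopst_def)
  then show ?case by (simp add: pmf.map_comp o_def pmf.map_ident)
next
  case (Suc t)
  have "map_pmf (stopst n r) (ea_traj (Fork n r) n (Suc t)) =
        bind_pmf (ea_traj (Fork n r) n t) (\<lambda>xs. map_pmf (\<lambda>y. stopst n r (xs @ [y])) (ea_step (Fork n r) n (last xs)))"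
    by (simp add: map_bind_pmf pmf.map_comp o_def)
  also have "\<dots> = bind_pmf (ea_traj (Fork n r) n t) (\<lambda>xs. abs_step n r (stopst n r xs))"
  proof (rule bind_pmf_cong[OF refl])
    fix xs assume xs: "xs \<in> set_pmf (ea_traj (Fork n r) n t)"
    then have ne: "xs \<noteq> []" using traj_len[OF xs] by auto
    show "map_pmf (\<lambda>y. stopst n r (xs @ [y])) (ea_step (Fork n r) n (last xs)) = abs_step n r (stopst n r xs)"
    proof (cases "find (tgt n r) xs")
      case None
      then have "\<not> tgt n r (last xs)" using ne by (simp add: find_None_iff)
      moreover have "(\<lambda>y. stopst n r (xs @ [y])) = (\<lambda>y. y)" using None by (simp add: stopst_snoc)
      moreover have "stopst n r xs = last xs" using None by (simp add: stopst_def)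
      ultimately show ?thesis by (simp add: abs_step_def pmf.map_ident)
    next
      case (Some x)
      then have "tgt n r x" by (auto simp: find_Some_iff)
      moreover have "(\<lambda>y. stopst n r (xs @ [y])) = (\<lambda>y. x)" using Some by (simp add: stopst_snoc)
      moreover have "stopst n r xs = x" using Some by (simp add: stopst_def)
      ultimately show ?thesis by (simp add: abs_step_def map_pmf_const)
    qed
  qed
  also have "\<dots> = abs_dist n r (Suc t)"
    by (simp add: Suc[symmetric] bind_map_pmf)
  finally show ?case .
qed

lemma lists_fin: "finite {x :: bool list. length x = n}"
  using finite_lists_length_eq[of "UNIV :: bool set" n] by simp

lemma lists_ne: "{x :: bool list. length x = n} \<noteq> {}"
  using length_replicate[of n True] by blast

lemma set_init: "set_pmf (init n) = {x. length x = n}"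
  unfolding init_def using lists_fin lists_ne by simp

lemma abs_dist_len: "x \<in> set_pmf (abs_dist n r t) \<Longrightarrow> length x = n"
proof (induction t arbitrary: x)
  case 0
  then show ?case by (simp add: set_init)
next
  case (Suc t)
  then obtain z where z: "z \<in> set_pmf (abs_dist n r t)" "x \<in> set_pmf (abs_step n r z)"
    by (auto simp: set_bind_pmf)
  then show ?case using Suc.IH[OF z(1)]
    by (auto simp: abs_step_def ea_step_def set_bind_pmf split: if_splits dest: mutate_len)
qed

lemma rev_valley: "rev (valley n r) = optimum n r"
  by (simp add: valley_def optimum_def)

lemma rev_optimum: "rev (optimum n r) = valley n r"
  by (simp add: valley_def optimum_def)

lemma tgt_rev: "tgt n r (rev x) = tgt n r x"
  unfolding tgt_def using rev_valley[of n r] rev_optimum[of n r] by (metis rev_rev_ident)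

lemma ones_rev: "ones (rev x) = ones x"
  unfolding ones_def by (simp add: rev_filter[symmetric])

lemma ones_le: "ones x \<le> length x"
  unfolding ones_def by simp

lemma Fork_nt: "\<not> tgt n r x \<Longrightarrow> Fork n r x = ones x"
  by (simp add: Fork_def tgt_def)

lemma Fork_t: "tgt n r x \<Longrightarrow> Fork n r x \<ge> n + 1"
  by (auto simp add: Fork_def tgt_def)

lemma Fork_cmp_rev:
  assumes "\<not> tgt n r x" "length x = n" "length y = n"
  shows "(Fork n r (rev x) \<le> Fork n r (rev y)) = (Fork n r x \<le> Fork n r y)"
proof -
  have fx: "Fork n r (rev x) = ones x" "Fork n r x = ones x"
    using assms(1) by (simp_all add: Fork_nt tgt_rev ones_rev)
  have ox: "ones x \<le> n" using ones_le[of x] assms by simp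
  show ?thesis
  proof (cases "tgt n r y")
    case True
    then show ?thesis using Fork_t[of n r y] Fork_t[of n r "rev y"] ox fx by (simp add: tgt_rev)
  next
    case False
    then show ?thesis using fx by (simp add: Fork_nt tgt_rev ones_rev)
  qed
qed

lemma abs_step_rev:
  assumes "length x = n"
  shows "map_pmf rev (abs_step n r x) = abs_step n r (rev x)"
proof (cases "tgt n r x")
  case True
  then show ?thesis by (simp add: abs_step_def tgt_rev)
next
  case False
  have "map_pmf rev (abs_step n r x) =
    bind_pmf (mutate (1 / real n) x) (\<lambda>y. return_pmf (rev (if Fork n r x \<le> Fork n r y then y else x)))"
    using False by (simp add: abs_step_def ea_step_def map_bind_pmf)
  also have "\<dots> = bind_pmf (mutate (1 / real n) x)
     (\<lambda>y. return_pmf (if Fork n r (rev x) \<le> Fork n r (rev y) then rev y else rev x))"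
  proof (rule bind_pmf_cong[OF refl])
    fix y assume "y \<in> set_pmf (mutate (1 / real n) x)"
    then have "length y = n" using mutate_len assms by metis
    then show "return_pmf (rev (if Fork n r x \<le> Fork n r y then y else x)) =
      return_pmf (if Fork n r (rev x) \<le> Fork n r (rev y) then rev y else rev x)"
      using Fork_cmp_rev[OF False assms] by simp
  qed
  also have "\<dots> = abs_step n r (rev x)"
    using False by (simp add: abs_step_def ea_step_def tgt_rev mutate_rev[symmetric] bind_map_pmf)
  finally show ?thesis .
qed

lemma abs_dist_rev: "map_pmf rev (abs_dist n r t) = abs_dist n r t"
proof (induction t)
  case 0
  have "rev ` {x :: bool list. length x = n} = {x. length x = n}"
    by (auto intro!: image_eqI[where x="rev _"])
  then show ?case unfolding init_def abs_dist.simps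
    using lists_fin lists_ne by (subst map_pmf_of_set_inj) (auto simp: inj_on_def)
next
  case (Suc t)
  have "map_pmf rev (abs_dist n r (Suc t)) = bind_pmf (abs_dist n r t) (\<lambda>x. abs_step n r (rev x))"
    unfolding abs_dist.simps map_bind_pmf
    by (rule bind_pmf_cong[OF refl]) (simp add: abs_step_rev abs_dist_len)
  also have "\<dots> = abs_dist n r (Suc t)"
    by (subst Suc[symmetric]) (simp add: bind_map_pmf)
  finally show ?case .
qed

lemma vf_iff:
  assumes "xs \<noteq> []" "valley n r \<noteq> optimum n r"
  shows "(xs \<in> valley_first n r) = (stopst n r xs = valley n r)"
proof (cases "find (tgt n r) xs")
  case None
  then have nt: "\<forall>x\<in>set xs. \<not> tgt n r x" by (simp add: find_None_iff)
  then have "last xs \<noteq> valley n r" using assms(1) last_in_set[of xs] by (auto simp: tgt_def)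
  moreover have "xs \<notin> valley_first n r" using nt by (auto simp: valley_first_def tgt_def)
  ultimately show ?thesis using None by (simp add: stopst_def)
next
  case (Some x)
  then obtain i where i: "i < length xs" "tgt n r (xs ! i)" "x = xs ! i" "\<forall>j<i. \<not> tgt n r (xs ! j)"
    by (auto simp: find_Some_iff)
  have st: "stopst n r xs = xs ! i" using Some i by (simp add: stopst_def)
  show ?thesis
  proof
    assume "xs \<in> valley_first n r"
    then obtain k where k: "k < length xs" "xs ! k = valley n r" "\<forall>j\<le>k. xs ! j \<noteq> optimum n r"
      by (auto simp: valley_first_def)
    have "\<not> k < i" using i(4) k(2) by (auto simp: tgt_def)
    then have "xs ! i \<noteq> optimum n r" using k(3) by simp
    then show "stopst n r xs = valley n r" using st i(2) by (simp add: tgt_def)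
  next
    assume "stopst n r xs = valley n r"
    then have "xs ! i = valley n r" using st by simp
    then show "xs \<in> valley_first n r" unfolding valley_first_def
      using i assms(2) by (auto simp: tgt_def intro!: exI[of _ i]) (metis le_neq_implies_less)
  qed
qed

lemma length_valley: "r \<le> n \<Longrightarrow> length (valley n r) = n"
  by (simp add: valley_def)

lemma step_hit:
  assumes "n \<ge> 2" "r \<le> n" "length x = n" "\<not> tgt n r x"
  shows "pmf (abs_step n r x) (valley n r) \<ge> (min (1 / real n) (1 - 1 / real n)) ^ n"
proof -
  let ?p = "1 / real n"
  let ?g = "\<lambda>y. if Fork n r x \<le> Fork n r y then y else x"
  have p: "0 \<le> ?p" "?p \<le> 1" using assms by auto
  have "abs_step n r x = map_pmf ?g (mutate ?p x)"
    using assms(4) by (simp add: abs_step_def ea_step_def map_pmf_def)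
  then have "pmf (abs_step n r x) (valley n r) = measure (mutate ?p x) (?g -` {valley n r})"
    by (simp add: pmf_map)
  moreover have "{valley n r} \<subseteq> ?g -` {valley n r}"
  proof -
    have "Fork n r x \<le> Fork n r (valley n r)"
      using Fork_nt[OF assms(4)] Fork_t[of n r "valley n r"] ones_le[of x] assms(3)
      by (simp add: tgt_def)
    then show ?thesis by simp
  qed
  then have "measure (mutate ?p x) {valley n r} \<le> measure (mutate ?p x) (?g -` {valley n r})"
    by (intro measure_pmf.finite_measure_mono) auto
  moreover have "pmf (mutate ?p x) (valley n r) \<ge> (min ?p (1 - ?p)) ^ n"
    using mutate_pmf_lb[OF p, of "valley n r" x] assms length_valley by simp
  ultimately show ?thesis by (simp add: measure_pmf_single)
qed

lemma step_stay:
  assumes "n \<ge> 2" "r \<le> n" "length x = n" "\<not> tgt n r x"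
  shows "measure (abs_step n r x) (- {y. tgt n r y}) \<le> 1 - (min (1 / real n) (1 - 1 / real n)) ^ n"
proof -
  let ?M = "abs_step n r x"
  have "measure ?M (- {y. tgt n r y}) \<le> measure ?M (UNIV - {valley n r})"
    by (intro measure_pmf.finite_measure_mono) (auto simp: tgt_def)
  also have "\<dots> = 1 - pmf ?M (valley n r)"
    using measure_pmf.prob_compl[of "{valley n r}" ?M] by (simp add: measure_pmf_single)
  finally show ?thesis using step_hit[OF assms] by simp
qed

lemma decay:
  assumes "n \<ge> 2" "r \<le> n"
  defines "c \<equiv> (min (1 / real n) (1 - 1 / real n)) ^ n"
  shows "measure (abs_dist n r (Suc t)) (- {y. tgt n r y}) \<le> (1 - c) * measure (abs_dist n r t) (- {y. tgt n r y})"
proof -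
  let ?A = "- {y. tgt n r y}"
  have c1: "c \<le> 1" unfolding c_def using assms by (intro power_le_one) auto
  have "emeasure (abs_dist n r (Suc t)) ?A = (\<integral>\<^sup>+x. emeasure (abs_step n r x) ?A \<partial>abs_dist n r t)"
    by simp
  also have "\<dots> \<le> (\<integral>\<^sup>+x. ennreal (1 - c) * indicator ?A x \<partial>abs_dist n r t)"
  proof (rule nn_integral_mono_AE)
    show "AE x in measure_pmf (abs_dist n r t). emeasure (abs_step n r x) ?A \<le> ennreal (1 - c) * indicator ?A x"
    proof (subst AE_measure_pmf_iff, intro ballI)
      fix x assume x: "x \<in> set_pmf (abs_dist n r t)"
      show "emeasure (abs_step n r x) ?A \<le> ennreal (1 - c) * indicator ?A x"
      proof (cases "tgt n r x")
        case True
        then show ?thesis by (simp add: abs_step_def)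
      next
        case False
        then show ?thesis using step_stay[OF assms(1,2) abs_dist_len[OF x] False]
          by (simp add: measure_pmf.emeasure_eq_measure c_def ennreal_leI)
      qed
    qed
  qed
  also have "\<dots> = ennreal (1 - c) * emeasure (abs_dist n r t) ?A"
    by (simp add: nn_integral_cmult_indicator)
  finally have "ennreal (measure (abs_dist n r (Suc t)) ?A) \<le> ennreal ((1 - c) * measure (abs_dist n r t) ?A)"
    using c1 by (simp add: measure_pmf.emeasure_eq_measure ennreal_mult)
  then show ?thesis using c1 by (simp add: ennreal_le_iff)
qed

lemma decay_pow:
  assumes "n \<ge> 2" "r \<le> n"
  defines "c \<equiv> (min (1 / real n) (1 - 1 / real n)) ^ n"
  shows "measure (abs_dist n r t) (- {y. tgt n r y}) \<le> (1 - c) ^ t"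
proof (induction t)
  case 0
  then show ?case by simp
next
  case (Suc t)
  have c1: "c \<le> 1" unfolding c_def using assms by (intro power_le_one) auto
  have "measure (abs_dist n r (Suc t)) (- {y. tgt n r y}) \<le> (1 - c) * measure (abs_dist n r t) (- {y. tgt n r y})"
    using decay[OF assms(1,2)] unfolding c_def by blast
  also have "\<dots> \<le> (1 - c) * (1 - c) ^ t" using Suc c1 by (intro mult_left_mono) auto
  finally show ?case by simp
qed

theorem lemma1:
  fixes n r :: nat
  assumes "r \<ge> 2" and "n \<ge> 2 * r"
  shows "(\<lambda>t. measure_pmf.prob (ea_traj (Fork n r) n t) (valley_first n r))
           \<longlonglongrightarrow> 1 / 2"
proof -
  have n2: "n \<ge> 2" and rn: "r \<le> n" using assms by auto
  define c where "c = (min (1 / real n) (1 - 1 / real n)) ^ n"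
  define q where "q t = measure (abs_dist n r t) (- {y. tgt n r y})" for t
  have vo: "valley n r \<noteq> optimum n r"
  proof
    assume "valley n r = optimum n r"
    then have "hd (valley n r) = hd (optimum n r)" by simp
    moreover have "hd (valley n r) = False" using assms by (simp add: valley_def)
    moreover have "hd (optimum n r) = True" using assms by (simp add: optimum_def)
    ultimately show False by simp
  qed
  have main: "measure_pmf.prob (ea_traj (Fork n r) n t) (valley_first n r) = (1 - q t) / 2" for t
  proof -
    let ?P = "ea_traj (Fork n r) n t"
    let ?D = "abs_dist n r t"
    have "measure_pmf.prob ?P (valley_first n r) = measure_pmf.prob ?P (valley_first n r \<inter> set_pmf ?P)"
      by (simp add: measure_Int_set_pmf)
    also have "valley_first n r \<inter> set_pmf ?P = (stopst n r -` {valley n r}) \<inter> set_pmf ?P"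
    proof (intro set_eqI iffI)
      fix xs assume that: "xs \<in> valley_first n r \<inter> set_pmf ?P"
      then show "xs \<in> (stopst n r -` {valley n r}) \<inter> set_pmf ?P"
      proof -
        have "xs \<noteq> []" using traj_len[of xs "Fork n r" n t] that by auto
        then show ?thesis using vf_iff[OF _ vo, of xs] that by auto
      qed
    next
      fix xs assume that: "xs \<in> (stopst n r -` {valley n r}) \<inter> set_pmf ?P"
      then show "xs \<in> valley_first n r \<inter> set_pmf ?P"
      proof -
        have "xs \<noteq> []" using traj_len[of xs "Fork n r" n t] that by auto
        then show ?thesis using vf_iff[OF _ vo, of xs] that by auto
      qed
    qed
    also have "measure_pmf.prob ?P \<dots> = measure ?D {valley n r}"
      by (simp add: measure_Int_set_pmf stop_traj[symmetric])
    finally have e1: "measure_pmf.prob ?P (valley_first n r) = measure ?D {valley n r}" .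
    have pre: "rev -` {optimum n r} = {valley n r}"
      using rev_valley[of n r] rev_optimum[of n r] by (auto, metis rev_rev_ident)
    have "measure ?D {optimum n r} = measure (map_pmf rev ?D) {optimum n r}"
      by (simp add: abs_dist_rev)
    also have "\<dots> = measure ?D {valley n r}" by (simp only: measure_map_pmf pre)
    finally have e2: "measure ?D {optimum n r} = measure ?D {valley n r}" .
    have U: "{valley n r} \<union> {optimum n r} \<union> - {y. tgt n r y} = UNIV" by (auto simp: tgt_def)
    have "1 = measure ?D ({valley n r} \<union> {optimum n r} \<union> - {y. tgt n r y})"
      unfolding U by simp
    also have "\<dots> = measure ?D ({valley n r} \<union> {optimum n r}) + q t"
      unfolding q_def by (rule measure_pmf.finite_measure_Union) (auto simp: tgt_def)
    also have "measure ?D ({valley n r} \<union> {optimum n r}) = measure ?D {valley n r} + measure ?D {optimum n r}"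
      using vo by (intro measure_pmf.finite_measure_Union) auto
    finally show ?thesis using e1 e2 by simp
  qed
  have c0: "0 < c" "c \<le> 1" unfolding c_def using n2 by (auto intro!: power_le_one simp: field_simps)
  have "(\<lambda>t. (1 - c) ^ t) \<longlonglongrightarrow> 0" using c0 by (intro LIMSEQ_power_zero) auto
  then have "q \<longlonglongrightarrow> 0"
    by (rule tendsto_sandwich[rotated 2, OF tendsto_const])
       (auto simp: q_def c_def decay_pow[OF n2 rn])
  then have "(\<lambda>t. (1 - q t) / 2) \<longlonglongrightarrow> (1 - 0) / (2::real)" by (intro tendsto_divide tendsto_diff tendsto_const) auto
  then show ?thesis by (simp add: main)
qed

end
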